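(* Let $T$ be a finite tree, let $k\ge 1$, and let $S=(W_1,\dots,W_k)$ be a covering strategy for $T$ with $k$ robots (at prescribed starting vertices) whose length $l(S)$ is minimum among all such covering strategies. Then for each $i$ the set of edges traversed by $W_i$ can be decomposed into two sets: the edges of a path $P(W_i)$ and the edges of a forest $F(W_i)$ (subgraphs of $T$), such that: (a) each edge of $P(W_i)$ is traversed exactly once by the $i$-th robot; (b) each edge of $F(W_i)$ is traversed exactly twice by the $i$-th robot and is never traversed by any other robot; (c) each connected component $C$ of $F(W_i)$ satisfies $\left|V(C)\cap \bigcup_{r=1}^k V(P(W_r))\right|=1$; (d) for every pair $j\neq l$, $V(F(W_j))\cap V(F(W_l))\subseteq \bigcup_{r=1}^k V(P(W_r))$.
   Context: Model: $T=(V,E)$ is a tree; robots move along edges, one edge per unit time step, or stay put. A walk is a sequence $W=(u_1,\dots,u_m)$ of vertices of $T$ in which consecutive terms are equal or adjacent; the robot following it stays at $u_m$ afterwards. The time of $W$ is $t(W)=m-1$; the length $l(W)$ is the number of indices $i\in\{1,\dots,m-1\}$ with $u_i\neq u_{i+1}$ (i.e. the number of edge traversals, counted with multiplicity). A strategy with $k$ robots is a $k$-tuple $S=(W_1,\dots,W_k)$ of walks, where $W_i$ starts at the prescribed starting vertex of robot $i$; it is covering if every vertex of $T$ lies in some $W_i$. Its length is $l(S)=\sum_{i=1}^k l(W_i)$. For a graph $G$, $V(G)$ is its vertex set. *)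

theory Defs
  imports Main
begin

definition graph :: "'a set \<Rightarrow> 'a set set \<Rightarrow> bool" where
  "graph V E \<longleftrightarrow> finite V \<and> (\<forall>e\<in>E. \<exists>u v. u \<noteq> v \<and> u \<in> V \<and> v \<in> V \<and> e = {u, v})"

definition adj :: "'a set set \<Rightarrow> 'a \<Rightarrow> 'a \<Rightarrow> bool" where
  "adj E u v \<longleftrightarrow> u \<noteq> v \<and> {u, v} \<in> E"

definition is_path :: "'a set set \<Rightarrow> 'a list \<Rightarrow> bool" where
  "is_path E xs \<longleftrightarrow> xs \<noteq> [] \<and> distinct xs \<and>
     (\<forall>i. i + 1 < length xs \<longrightarrow> adj E (xs ! i) (xs ! (i + 1)))"

definition is_cycle :: "'a set set \<Rightarrow> 'a list \<Rightarrow> bool" where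
  "is_cycle E xs \<longleftrightarrow> length xs \<ge> 3 \<and> is_path E xs \<and> adj E (last xs) (hd xs)"

definition connected_graph :: "'a set \<Rightarrow> 'a set set \<Rightarrow> bool" where
  "connected_graph V E \<longleftrightarrow>
     (\<forall>u\<in>V. \<forall>v\<in>V. \<exists>xs. is_path E xs \<and> hd xs = u \<and> last xs = v)"

definition tree :: "'a set \<Rightarrow> 'a set set \<Rightarrow> bool" where
  "tree V E \<longleftrightarrow> graph V E \<and> V \<noteq> {} \<and> connected_graph V E \<and> \<not> (\<exists>xs. is_cycle E xs)"

definition path_edges :: "'a list \<Rightarrow> 'a set set" where
  "path_edges xs = {{xs ! i, xs ! (i + 1)} | i. i + 1 < length xs}"

text \<open>Walks: consecutive vertices equal (waiting) or adjacent.\<close>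
definition is_walk :: "'a set \<Rightarrow> 'a set set \<Rightarrow> 'a list \<Rightarrow> bool" where
  "is_walk V E W \<longleftrightarrow> W \<noteq> [] \<and> set W \<subseteq> V \<and>
     (\<forall>i. i + 1 < length W \<longrightarrow> W ! i = W ! (i + 1) \<or> adj E (W ! i) (W ! (i + 1)))"

definition walk_length :: "'a list \<Rightarrow> nat" where
  "walk_length W = card {i. i + 1 < length W \<and> W ! i \<noteq> W ! (i + 1)}"

definition trav_count :: "'a list \<Rightarrow> 'a set \<Rightarrow> nat" where
  "trav_count W e = card {i. i + 1 < length W \<and> W ! i \<noteq> W ! (i + 1) \<and> {W ! i, W ! (i + 1)} = e}"

definition traversed :: "'a list \<Rightarrow> 'a set set" where
  "traversed W = {{W ! i, W ! (i + 1)} | i. i + 1 < length W \<and> W ! i \<noteq> W ! (i + 1)}"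

definition strategy :: "'a set \<Rightarrow> 'a set set \<Rightarrow> (nat \<Rightarrow> 'a) \<Rightarrow> nat \<Rightarrow> (nat \<Rightarrow> 'a list) \<Rightarrow> bool" where
  "strategy V E s k W \<longleftrightarrow> (\<forall>i<k. is_walk V E (W i) \<and> hd (W i) = s i)"

definition covering :: "'a set \<Rightarrow> nat \<Rightarrow> (nat \<Rightarrow> 'a list) \<Rightarrow> bool" where
  "covering V k W \<longleftrightarrow> V \<subseteq> (\<Union>i<k. set (W i))"

definition strategy_length :: "nat \<Rightarrow> (nat \<Rightarrow> 'a list) \<Rightarrow> nat" where
  "strategy_length k W = (\<Sum>i<k. walk_length (W i))"

text \<open>Vertex set of the (edge-induced) subgraph with edge set F.\<close>
definition edge_verts :: "'a set set \<Rightarrow> 'a set" where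
  "edge_verts F = \<Union>F"

definition component :: "'a set set \<Rightarrow> 'a \<Rightarrow> 'a set" where
  "component F v = {w. (adj F)\<^sup>*\<^sup>* v w}"

end

theory Submission
  imports Defs
begin

lemma adj_sym: "adj A u v \<Longrightarrow> adj A v u"
  unfolding adj_def by (auto simp: insert_commute)

lemma adj_edge: "adj A u v \<Longrightarrow> {u,v} \<in> A"
  unfolding adj_def by auto

lemma adj_mono: "adj A u v \<Longrightarrow> A \<subseteq> B \<Longrightarrow> adj B u v"
  unfolding adj_def by auto

lemma rt_mono: "(adj A)\<^sup>*\<^sup>* u v \<Longrightarrow> A \<subseteq> B \<Longrightarrow> (adj B)\<^sup>*\<^sup>* u v"
  by (metis adj_mono mono_rtranclp)

lemma rt_sym: "(adj A)\<^sup>*\<^sup>* u v \<Longrightarrow> (adj A)\<^sup>*\<^sup>* v u"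
proof (induction rule: rtranclp_induct)
  case base then show ?case by simp
next
  case (step y z)
  then show ?case by (meson adj_sym converse_rtranclp_into_rtranclp)
qed

lemma rt_verts: "(adj A)\<^sup>*\<^sup>* a b \<Longrightarrow> b = a \<or> b \<in> \<Union>A"
proof (induction rule: rtranclp_induct)
  case base then show ?case by simp
next
  case (step y z)
  then show ?case using adj_edge[of A y z] by blast
qed

lemma rt_verts2: "(adj A)\<^sup>*\<^sup>* a b \<Longrightarrow> a \<noteq> b \<Longrightarrow> a \<in> \<Union>A \<and> b \<in> \<Union>A"
  using rt_verts rt_sym by metis

lemma list_reach:
  assumes "\<And>m. a \<le> m \<Longrightarrow> m < b \<Longrightarrow> xs!m = xs!(Suc m) \<or> adj A (xs!m) (xs!(Suc m))"
    and "a \<le> b"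
  shows "(adj A)\<^sup>*\<^sup>* (xs!a) (xs!b)"
  using assms
proof (induction b)
  case 0 then show ?case by simp
next
  case (Suc b)
  show ?case
  proof (cases "a = Suc b")
    case True then show ?thesis by simp
  next
    case False
    then have "(adj A)\<^sup>*\<^sup>* (xs!a) (xs!b)" using Suc by auto
    moreover have "xs!b = xs!(Suc b) \<or> adj A (xs!b) (xs!(Suc b))" using Suc False by auto
    ultimately show ?thesis by (metis rtranclp.rtrancl_into_rtrancl)
  qed
qed

lemma rt_sub:
  assumes "(adj A)\<^sup>*\<^sup>* a x"
  shows "(adj {f\<in>A. f \<subseteq> {y. (adj A)\<^sup>*\<^sup>* a y}})\<^sup>*\<^sup>* a x"
  using assms
proof (induction rule: rtranclp_induct)
  case base then show ?case by simp
next
  case (step y z)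
  then have "(adj A)\<^sup>*\<^sup>* a z" by (meson rtranclp.rtrancl_into_rtrancl)
  with step have "adj {f\<in>A. f \<subseteq> {y. (adj A)\<^sup>*\<^sup>* a y}} y z"
    unfolding adj_def by auto
  then show ?case using step by (meson rtranclp.rtrancl_into_rtrancl)
qed

lemma is_path_single: "is_path A [x]"
  unfolding is_path_def by auto

lemma is_path_mono: "is_path A xs \<Longrightarrow> A \<subseteq> B \<Longrightarrow> is_path B xs"
  unfolding is_path_def by (metis adj_mono)

lemma is_path_snoc:
  assumes "is_path A xs" "z \<notin> set xs" "adj A (last xs) z"
  shows "is_path A (xs @ [z])"
  unfolding is_path_def
proof (intro conjI allI impI)
  show "xs @ [z] \<noteq> []" by simp
  show "distinct (xs @ [z])" using assms unfolding is_path_def by auto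
  fix i assume i: "i + 1 < length (xs @ [z])"
  show "adj A ((xs @ [z]) ! i) ((xs @ [z]) ! (i + 1))"
  proof (cases "i + 1 < length xs")
    case True then show ?thesis using assms(1) unfolding is_path_def by (auto simp: nth_append)
  next
    case False
    then have "i = length xs - 1" "xs \<noteq> []" using i assms(1) unfolding is_path_def by auto
    then show ?thesis using assms(3) by (auto simp: nth_append last_conv_nth)
  qed
qed

lemma is_path_take:
  assumes "is_path A xs" "n < length xs"
  shows "is_path A (take (Suc n) xs)"
  using assms unfolding is_path_def by auto

lemma rt_path:
  assumes "(adj A)\<^sup>*\<^sup>* a b"
  shows "\<exists>xs. is_path A xs \<and> hd xs = a \<and> last xs = b"
  using assms
proof (induction rule: rtranclp_induct)
  case base then show ?case using is_path_single by fastforce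
next
  case (step y z)
  then obtain xs where xs: "is_path A xs" "hd xs = a" "last xs = y" by blast
  have ne: "xs \<noteq> []" using xs unfolding is_path_def by auto
  show ?case
  proof (cases "z \<in> set xs")
    case True
    then obtain n where n: "n < length xs" "xs!n = z" by (meson in_set_conv_nth)
    then have "is_path A (take (Suc n) xs)" using is_path_take xs by blast
    moreover have "hd (take (Suc n) xs) = a" using xs ne by (simp add: hd_take)
    moreover have "last (take (Suc n) xs) = z" using n by (simp add: take_Suc_conv_app_nth)
    ultimately show ?thesis by blast
  next
    case False
    then show ?thesis using is_path_snoc[OF xs(1) False] xs step ne by auto
  qed
qed

lemma path_edges_sub: "is_path A P \<Longrightarrow> path_edges P \<subseteq> A"
  unfolding is_path_def path_edges_def using adj_edge by fastforce

lemma path_edges_verts: "\<Union>(path_edges P) \<subseteq> set P"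
  unfolding path_edges_def by auto

lemma path_verts: "P \<noteq> [] \<Longrightarrow> set P \<subseteq> {hd P} \<union> \<Union>(path_edges P)"
proof
  fix x assume "P \<noteq> []" "x \<in> set P"
  then obtain i where i: "i < length P" "P!i = x" by (meson in_set_conv_nth)
  show "x \<in> {hd P} \<union> \<Union>(path_edges P)"
  proof (cases i)
    case 0 then show ?thesis using i \<open>P \<noteq> []\<close> by (simp add: hd_conv_nth)
  next
    case (Suc j)
    then have "{P!j, P!(j+1)} \<in> path_edges P" using i unfolding path_edges_def by auto
    then show ?thesis using i Suc by auto
  qed
qed

lemma path_reach:
  assumes "is_path A P" "i < length P"
  shows "(adj (path_edges P))\<^sup>*\<^sup>* (hd P) (P!i)"
proof -
  have "P \<noteq> []" using assms unfolding is_path_def by auto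
  have "(adj (path_edges P))\<^sup>*\<^sup>* (P!0) (P!i)"
  proof (rule list_reach)
    fix m assume "0 \<le> m" "m < i"
    then have "Suc m < length P" using assms by auto
    then have "P!m \<noteq> P!(Suc m)" "{P!m, P!(m+1)} \<in> path_edges P"
      using assms(1) unfolding is_path_def path_edges_def
      by (auto simp: nth_eq_iff_index_eq)
    then show "P!m = P!(Suc m) \<or> adj (path_edges P) (P!m) (P!(Suc m))"
      unfolding adj_def by auto
  qed simp
  then show ?thesis using \<open>P \<noteq> []\<close> by (simp add: hd_conv_nth)
qed

lemma path_edges_card:
  assumes "distinct P"
  shows "card (path_edges P) = length P - 1"
proof -
  have "path_edges P = (\<lambda>i. {P!i, P!(i+1)}) ` {..<length P - 1}"
    unfolding path_edges_def by auto
  moreover have "inj_on (\<lambda>i. {P!i, P!(i+1)}) {..<length P - 1}"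
  proof (rule inj_onI)
    fix i j assume ij: "i \<in> {..<length P - 1}" "j \<in> {..<length P - 1}"
      "{P!i, P!(i+1)} = {P!j, P!(j+1)}"
    then have "P!i = P!j \<or> (P!i = P!(j+1) \<and> P!(i+1) = P!j)" by (auto simp: doubleton_eq_iff)
    then show "i = j" using ij(1,2) assms by (auto simp: nth_eq_iff_index_eq)
  qed
  ultimately show ?thesis by (simp add: card_image)
qed


lemma walk_length_cons:
  assumes "xs \<noteq> []"
  shows "walk_length (x # xs) = (if x = hd xs then 0 else 1) + walk_length xs"
proof -
  define M where "M = {i. i + 1 < length xs \<and> xs ! i \<noteq> xs ! (i + 1)}"
  have eq: "{i. i + 1 < length (x#xs) \<and> (x#xs) ! i \<noteq> (x#xs) ! (i + 1)}
        = (if x = hd xs then {} else {0}) \<union> Suc ` M"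
  proof (rule set_eqI)
    fix i show "i \<in> {i. i + 1 < length (x#xs) \<and> (x#xs) ! i \<noteq> (x#xs) ! (i + 1)} \<longleftrightarrow>
       i \<in> (if x = hd xs then {} else {0}) \<union> Suc ` M"
      using assms by (cases i) (auto simp: M_def hd_conv_nth)
  qed
  have fin: "finite M" unfolding M_def by (rule finite_subset[of _ "{..<length xs}"]) auto
  have "0 \<notin> Suc ` M" by auto
  then have "card ((if x = hd xs then {} else {0}) \<union> Suc ` M) =
      (if x = hd xs then 0 else 1) + card (Suc ` M)"
    using fin by (auto simp: card_insert_if)
  also have "card (Suc ` M) = card M" by (simp add: card_image)
  finally show ?thesis unfolding walk_length_def eq M_def by simp
qed

lemma walk_length_single[simp]: "walk_length [x] = 0"
  unfolding walk_length_def by simp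

lemma walk_length_snoc:
  "xs \<noteq> [] \<Longrightarrow> walk_length (xs @ [y]) = walk_length xs + (if last xs = y then 0 else 1)"
proof (induction xs)
  case Nil then show ?case by simp
next
  case (Cons a xs)
  show ?case
  proof (cases "xs = []")
    case True then show ?thesis by (simp add: walk_length_cons)
  next
    case False
    then show ?thesis using Cons by (simp add: walk_length_cons)
  qed
qed

lemma walk_length_app:
  "walk_length (xs @ y # ys) = walk_length (xs @ [y]) + walk_length (y # ys)"
proof (induction xs)
  case Nil then show ?case by simp
next
  case (Cons a xs)
  have "walk_length (a # (xs @ y # ys)) = (if a = hd (xs @ y # ys) then 0 else 1) + walk_length (xs @ y # ys)"
    by (rule walk_length_cons) simp
  moreover have "walk_length (a # (xs @ [y])) = (if a = hd (xs @ [y]) then 0 else 1) + walk_length (xs @ [y])"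
    by (rule walk_length_cons) simp
  moreover have "hd (xs @ y # ys) = hd (xs @ [y])" by (cases xs) auto
  ultimately show ?case using Cons by simp
qed

lemma is_walk_cons:
  assumes "xs \<noteq> []"
  shows "is_walk V E (x # xs) \<longleftrightarrow> x \<in> V \<and> (x = hd xs \<or> adj E x (hd xs)) \<and> is_walk V E xs"
proof -
  have "(\<forall>i. i + 1 < length (x#xs) \<longrightarrow> (x#xs) ! i = (x#xs) ! (i + 1) \<or> adj E ((x#xs) ! i) ((x#xs) ! (i + 1)))
    \<longleftrightarrow> (x = hd xs \<or> adj E x (hd xs)) \<and>
        (\<forall>i. i + 1 < length xs \<longrightarrow> xs ! i = xs ! (i + 1) \<or> adj E (xs ! i) (xs ! (i + 1)))"
    (is "?L \<longleftrightarrow> ?R")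
  proof
    assume L: ?L
    have "(x = hd xs \<or> adj E x (hd xs))" using L[rule_format, of 0] assms by (simp add: hd_conv_nth)
    moreover have "\<forall>i. i + 1 < length xs \<longrightarrow> xs ! i = xs ! (i + 1) \<or> adj E (xs ! i) (xs ! (i + 1))"
      using L by (metis Suc_eq_plus1 length_Cons nth_Cons_Suc Suc_less_eq)
    ultimately show ?R by blast
  next
    assume R: ?R
    show ?L
    proof (intro allI impI)
      fix i assume "i + 1 < length (x#xs)"
      then show "(x#xs) ! i = (x#xs) ! (i + 1) \<or> adj E ((x#xs) ! i) ((x#xs) ! (i + 1))"
        using R assms by (cases i) (auto simp: hd_conv_nth)
    qed
  qed
  then show ?thesis unfolding is_walk_def using assms by auto
qed

lemma is_walk_single[simp]: "is_walk V E [x] \<longleftrightarrow> x \<in> V"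
  unfolding is_walk_def by simp

lemma is_walk_app:
  "is_walk V E (xs @ y # ys) \<longleftrightarrow> is_walk V E (xs @ [y]) \<and> is_walk V E (y # ys)"
proof (induction xs)
  case Nil then show ?case by (cases ys) (auto simp: is_walk_cons)
next
  case (Cons a xs)
  have h: "hd (xs @ y # ys) = hd (xs @ [y])" by (cases xs) auto
  show ?case using Cons by (simp add: is_walk_cons h)
qed

lemma is_walk_snoc:
  "is_walk V E xs \<Longrightarrow> y \<in> V \<Longrightarrow> (last xs = y \<or> adj E (last xs) y) \<Longrightarrow> is_walk V E (xs @ [y])"
proof (induction xs)
  case Nil then show ?case unfolding is_walk_def by simp
next
  case (Cons a xs)
  show ?case
  proof (cases "xs = []")
    case True then show ?thesis using Cons by (simp add: is_walk_cons)
  next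
    case False
    then show ?thesis using Cons by (simp add: is_walk_cons)
  qed
qed

lemma walk_ne: "is_walk V E W \<Longrightarrow> W \<noteq> []"
  unfolding is_walk_def by simp

lemma walk_set:
  assumes "is_walk V E W"
  shows "set W \<subseteq> {hd W} \<union> \<Union>(traversed W)"
proof -
  have "W ! j \<in> {hd W} \<union> \<Union>(traversed W)" if "j < length W" for j
    using that
  proof (induction j)
    case 0 then show ?case using assms by (simp add: hd_conv_nth walk_ne)
  next
    case (Suc j)
    show ?case
    proof (cases "W!j = W!(Suc j)")
      case True then show ?thesis using Suc by simp
    next
      case False
      then have "{W!j, W!(j+1)} \<in> traversed W" using Suc unfolding traversed_def by auto
      then show ?thesis by auto
    qed
  qed
  then show ?thesis by (metis in_set_conv_nth subsetI)
qed

lemma walk_trav_E: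
  assumes "is_walk V E W" shows "traversed W \<subseteq> E"
  using assms unfolding is_walk_def traversed_def adj_def by fastforce

lemma finite_trav: "finite (traversed W)"
proof -
  have "traversed W = (\<lambda>i. {W!i, W!(i+1)}) ` {i. i + 1 < length W \<and> W ! i \<noteq> W ! (i + 1)}"
    unfolding traversed_def by auto
  moreover have "finite {i. i + 1 < length W \<and> W ! i \<noteq> W ! (i + 1)}"
    by (rule finite_subset[of _ "{..<length W}"]) auto
  ultimately show ?thesis by simp
qed

lemma walk_reach:
  assumes "is_walk V E W" "j < length W"
  shows "(adj (traversed W))\<^sup>*\<^sup>* (hd W) (W!j)"
proof -
  have "(adj (traversed W))\<^sup>*\<^sup>* (W!0) (W!j)"
  proof (rule list_reach)
    fix m assume "0 \<le> m" "m < j"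
    then have "Suc m < length W" using assms by auto
    then show "W!m = W!(Suc m) \<or> adj (traversed W) (W!m) (W!(Suc m))"
      unfolding adj_def traversed_def by fastforce
  qed simp
  then show ?thesis using assms by (simp add: hd_conv_nth walk_ne)
qed

lemma walk_reach_last:
  assumes "is_walk V E W"
  shows "(adj (traversed W))\<^sup>*\<^sup>* (hd W) (last W)"
  using walk_reach[OF assms, of "length W - 1"] walk_ne[OF assms] by (simp add: last_conv_nth)

lemma walk_conn:
  assumes "is_walk V E W"
  shows "\<forall>x\<in>\<Union>(traversed W). (adj (traversed W))\<^sup>*\<^sup>* (hd W) x"
proof
  fix x assume "x \<in> \<Union>(traversed W)"
  then obtain i where i: "i + 1 < length W" "x = W!i \<or> x = W!(i+1)"
    unfolding traversed_def by auto
  then show "(adj (traversed W))\<^sup>*\<^sup>* (hd W) x"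
    using walk_reach[OF assms, of i] walk_reach[OF assms, of "i+1"] by auto
qed

lemma wl_sum: "walk_length W = (\<Sum>e\<in>traversed W. trav_count W e)"
proof -
  define M where "M = {i. i + 1 < length W \<and> W ! i \<noteq> W ! (i + 1)}"
  define h where "h = (\<lambda>i. {W!i, W!(i+1)})"
  have fin: "finite M" unfolding M_def by (rule finite_subset[of _ "{..<length W}"]) auto
  have tr: "traversed W = h ` M" unfolding traversed_def M_def h_def by auto
  have "card M = (\<Sum>e\<in>h ` M. card {i\<in>M. h i = e})"
    using card_eq_sum[of M] sum.image_gen[OF fin, of "\<lambda>_. 1::nat" h] fin by simp
  moreover have "\<And>e. trav_count W e = card {i\<in>M. h i = e}"
    unfolding trav_count_def M_def h_def by (intro arg_cong[where f=card]) auto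
  ultimately show ?thesis unfolding walk_length_def tr M_def by simp
qed

lemma tc_pos:
  assumes "e \<in> traversed W" shows "trav_count W e \<ge> 1"
proof -
  have fin: "finite {i. i + 1 < length W \<and> W ! i \<noteq> W ! (i + 1) \<and> {W ! i, W ! (i + 1)} = e}"
    by (rule finite_subset[of _ "{..<length W}"]) auto
  from assms obtain i where "i + 1 < length W \<and> W ! i \<noteq> W ! (i + 1) \<and> {W ! i, W ! (i + 1)} = e"
    unfolding traversed_def by auto
  then show ?thesis unfolding trav_count_def using fin
    by (metis (mono_tags, lifting) One_nat_def Suc_leI card_gt_0_iff empty_iff mem_Collect_eq)
qed

lemma path_walk:
  assumes "is_path E P" "set P \<subseteq> V"
  shows "is_walk V E P" "walk_length P = length P - 1"
proof -
  show "is_walk V E P" using assms unfolding is_path_def is_walk_def by auto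
  have "{i. i + 1 < length P \<and> P ! i \<noteq> P ! (i + 1)} = {..<length P - 1}"
    using assms(1) unfolding is_path_def by (auto simp: nth_eq_iff_index_eq)
  then show "walk_length P = length P - 1" unfolding walk_length_def by simp
qed


lemma tree_edge:
  assumes "tree V E" "e \<in> E"
  shows "\<exists>a b. a \<noteq> b \<and> a \<in> V \<and> b \<in> V \<and> e = {a, b}"
  using assms unfolding tree_def graph_def by blast

lemma tree_finE: assumes "tree V E" shows "finite E"
proof -
  have "E \<subseteq> Pow V"
  proof
    fix e assume "e \<in> E"
    then obtain a b where "a \<in> V" "b \<in> V" "e = {a,b}" using tree_edge[OF assms] by blast
    then show "e \<in> Pow V" by auto
  qed
  moreover have "finite V" using assms unfolding tree_def graph_def by blast
  ultimately show ?thesis using finite_subset by blast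
qed

lemma tree_edges_V: assumes "tree V E" shows "\<Union>E \<subseteq> V"
  using tree_edge[OF assms] by fastforce

lemma T1:
  assumes "tree V E" "e \<in> E" "u \<in> e" "v \<in> e" "u \<noteq> v" "A \<subseteq> E - {e}" "(adj A)\<^sup>*\<^sup>* u v"
  shows False
proof -
  obtain a b where ab: "a \<noteq> b" "e = {a,b}" using tree_edge[OF assms(1,2)] by blast
  have e: "e = {u,v}" using ab assms(3,4,5) by auto
  obtain xs where xs: "is_path A xs" "hd xs = u" "last xs = v" using rt_path[OF assms(7)] by blast
  have ne: "xs \<noteq> []" using xs unfolding is_path_def by auto
  have l2: "length xs \<ge> 2"
  proof (rule ccontr)
    assume "\<not> length xs \<ge> 2"
    moreover have "length xs > 0" using ne by simp
    ultimately have "length xs = 1" by linarith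
    then have "hd xs = last xs" by (cases xs) auto
    then show False using xs assms(5) by simp
  qed
  have l3: "length xs \<ge> 3"
  proof (rule ccontr)
    assume "\<not> length xs \<ge> 3"
    then have "length xs = 2" using l2 by simp
    then have "adj A (xs!0) (xs!(0+1))" using xs(1) unfolding is_path_def by auto
    then have "adj A u v" using xs ne \<open>length xs = 2\<close> by (simp add: hd_conv_nth last_conv_nth)
    then have "{u,v} \<in> A" by (rule adj_edge)
    then show False using assms(6) e by auto
  qed
  have "is_path E xs" using is_path_mono[OF xs(1)] assms(6) by auto
  moreover have "adj E (last xs) (hd xs)" using xs assms e unfolding adj_def by (auto simp: insert_commute)
  ultimately have "is_cycle E xs" using l3 unfolding is_cycle_def by auto
  then show False using assms(1) unfolding tree_def by blast
qed

lemma KEY: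
  assumes "tree V E" "is_walk V E W" "is_path E P" "hd P = hd W" "last P = last W"
    and "trav_count W e = 1"
  shows "e \<in> path_edges P"
proof (rule ccontr)
  assume nP: "e \<notin> path_edges P"
  define I where "I = {i. i + 1 < length W \<and> W ! i \<noteq> W ! (i + 1) \<and> {W ! i, W ! (i + 1)} = e}"
  have "card I = 1" using assms(6) unfolding I_def trav_count_def by simp
  then obtain j where I: "I = {j}" by (meson card_1_singletonE)
  then have j: "j + 1 < length W" "W ! j \<noteq> W ! (j + 1)" "{W ! j, W ! (j + 1)} = e"
    unfolding I_def by auto
  have eE: "e \<in> E" using walk_trav_E[OF assms(2)] j unfolding traversed_def by auto
  define A where "A = E - {e}"
  have step: "W!m = W!(Suc m) \<or> adj A (W!m) (W!(Suc m))" if "Suc m < length W" "m \<noteq> j" for m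
  proof -
    have "W!m = W!(Suc m) \<or> adj E (W!m) (W!(Suc m))" using assms(2) that unfolding is_walk_def by auto
    moreover have "W!m \<noteq> W!(Suc m) \<Longrightarrow> {W!m, W!(Suc m)} \<noteq> e" using I that unfolding I_def by auto
    ultimately show ?thesis unfolding A_def adj_def by auto
  qed
  have r1: "(adj A)\<^sup>*\<^sup>* (W!0) (W!j)" by (rule list_reach) (use step j in auto)
  have r2: "(adj A)\<^sup>*\<^sup>* (W!(j+1)) (W!(length W - 1))" by (rule list_reach) (use step j in auto)
  have Pne: "P \<noteq> []" using assms(3) unfolding is_path_def by auto
  have "(adj (path_edges P))\<^sup>*\<^sup>* (hd P) (P!(length P - 1))" using path_reach[OF assms(3)] Pne by simp
  moreover have "path_edges P \<subseteq> A" using path_edges_sub[OF assms(3)] nP unfolding A_def by auto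
  ultimately have r3: "(adj A)\<^sup>*\<^sup>* (hd P) (last P)" using rt_mono Pne by (metis last_conv_nth)
  have Wne: "W \<noteq> []" using walk_ne[OF assms(2)] .
  have "(adj A)\<^sup>*\<^sup>* (W!j) (W!(j+1))"
  proof -
    have "(adj A)\<^sup>*\<^sup>* (W!j) (hd W)" using rt_sym[OF r1] Wne by (simp add: hd_conv_nth)
    moreover have "(adj A)\<^sup>*\<^sup>* (last W) (W!(j+1))" using rt_sym[OF r2] Wne by (simp add: last_conv_nth)
    ultimately show ?thesis using r3 assms(4,5) by (metis rtranclp_trans)
  qed
  then show False using T1[OF assms(1) eE, of "W!j" "W!(j+1)" A] j unfolding A_def by auto
qed

lemma LB:
  assumes "tree V E" "is_walk V E W" "is_path (traversed W) P" "hd P = hd W" "last P = last W"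
  shows "\<forall>e\<in>traversed W. (if e \<in> path_edges P then 1 else 2) \<le> trav_count W e"
    and "(\<Sum>e\<in>traversed W. (if e \<in> path_edges P then 1 else 2::nat)) + card (path_edges P)
           = 2 * card (traversed W)"
    and "2 * card (traversed W) \<le> walk_length W + card (path_edges P)"
proof -
  have PE: "is_path E P" using is_path_mono[OF assms(3) walk_trav_E[OF assms(2)]] .
  have sub: "path_edges P \<subseteq> traversed W" using path_edges_sub[OF assms(3)] .
  show 1: "\<forall>e\<in>traversed W. (if e \<in> path_edges P then 1 else 2) \<le> trav_count W e"
  proof
    fix e assume e: "e \<in> traversed W"
    have "trav_count W e \<ge> 1" using tc_pos[OF e] .
    moreover have "e \<notin> path_edges P \<Longrightarrow> trav_count W e \<noteq> 1"
      using KEY[OF assms(1,2) PE assms(4,5)] by blast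
    ultimately show "(if e \<in> path_edges P then 1 else 2) \<le> trav_count W e" by auto
  qed
  have fin: "finite (traversed W)" by (rule finite_trav)
  have "(\<Sum>e\<in>traversed W. (if e \<in> path_edges P then 1 else 2::nat))
      = card (traversed W \<inter> path_edges P) + 2 * card (traversed W - path_edges P)"
    using fin by (simp add: sum.If_cases Diff_eq)
  moreover have "traversed W \<inter> path_edges P = path_edges P" using sub by auto
  moreover have "card (traversed W) = card (path_edges P) + card (traversed W - path_edges P)"
    using fin sub by (metis card_Diff_subset finite_subset le_add_diff_inverse card_mono)
  ultimately show 2: "(\<Sum>e\<in>traversed W. (if e \<in> path_edges P then 1 else 2::nat)) + card (path_edges P)
           = 2 * card (traversed W)" by simp
  have "(\<Sum>e\<in>traversed W. (if e \<in> path_edges P then 1 else 2::nat)) \<le> walk_length W"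
    unfolding wl_sum using 1 by (simp add: sum_mono)
  then show "2 * card (traversed W) \<le> walk_length W + card (path_edges P)" using 2 by simp
qed


lemma ORI:
  assumes "D \<subseteq> E" "\<forall>x\<in>\<Union>D. (adj D)\<^sup>*\<^sup>* s x" "e \<in> D" "e = {a,b}"
  shows "(adj (D-{e}))\<^sup>*\<^sup>* s a \<or> (adj (D-{e}))\<^sup>*\<^sup>* s b"
proof -
  have "(adj D)\<^sup>*\<^sup>* s x \<Longrightarrow> (adj (D-{e}))\<^sup>*\<^sup>* s x \<or> (adj (D-{e}))\<^sup>*\<^sup>* s a \<or> (adj (D-{e}))\<^sup>*\<^sup>* s b" for x
  proof (induction rule: rtranclp_induct)
    case base then show ?case by simp
  next
    case (step y z)
    show ?case
    proof (cases "{y,z} = e")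
      case True
      then have "y = a \<or> y = b" using assms(4) by (auto simp: doubleton_eq_iff)
      then show ?thesis using step by auto
    next
      case False
      then have "adj (D-{e}) y z" using step(2) unfolding adj_def by auto
      then show ?thesis using step by (meson rtranclp.rtrancl_into_rtrancl)
    qed
  qed
  moreover have "(adj D)\<^sup>*\<^sup>* s a" using assms by auto
  ultimately show ?thesis by blast
qed

lemma SPLIT:
  assumes tr: "tree V E" and DE: "D \<subseteq> E" and fin: "finite D"
    and conn: "\<forall>x\<in>\<Union>D. (adj D)\<^sup>*\<^sup>* s x" and eD: "e \<in> D" and e: "e = {u,w}" and uw: "u \<noteq> w"
    and us: "(adj (D-{e}))\<^sup>*\<^sup>* s u"
  defines "Rs \<equiv> {x. (adj (D-{e}))\<^sup>*\<^sup>* s x}" and "Rw \<equiv> {x. (adj (D-{e}))\<^sup>*\<^sup>* w x}"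
    and "D1 \<equiv> {f \<in> D - {e}. f \<subseteq> {x. (adj (D-{e}))\<^sup>*\<^sup>* s x}}"
    and "D2 \<equiv> {f \<in> D - {e}. f \<subseteq> {x. (adj (D-{e}))\<^sup>*\<^sup>* w x}}"
  shows "w \<notin> Rs" "D1 \<inter> D2 = {}" "D1 \<union> D2 = D - {e}" "card D1 + card D2 + 1 = card D"
    "\<forall>x\<in>Rs. (adj D1)\<^sup>*\<^sup>* s x" "\<forall>x\<in>Rw. (adj D2)\<^sup>*\<^sup>* w x"
    "Rs \<subseteq> {s} \<union> \<Union>D1" "Rw \<subseteq> {w} \<union> \<Union>D2"
    "\<Union>D \<subseteq> {s} \<union> \<Union>D1 \<union> {w} \<union> \<Union>D2"
    "\<forall>x\<in>\<Union>D1. (adj D1)\<^sup>*\<^sup>* s x" "\<forall>x\<in>\<Union>D2. (adj D2)\<^sup>*\<^sup>* w x"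
    "finite D1" "finite D2" "D1 \<subseteq> E" "D2 \<subseteq> E"
proof -
  have eE: "e \<in> E" using eD DE by auto
  have D1R: "D1 = {f \<in> D - {e}. f \<subseteq> Rs}" unfolding D1_def Rs_def ..
  have D2R: "D2 = {f \<in> D - {e}. f \<subseteq> Rw}" unfolding D2_def Rw_def ..
  have sub: "D - {e} \<subseteq> E - {e}" using DE by auto
  show wRs: "w \<notin> Rs"
  proof
    assume "w \<in> Rs"
    then have "(adj (D-{e}))\<^sup>*\<^sup>* u w" using us rt_sym unfolding Rs_def by (metis mem_Collect_eq rtranclp_trans)
    then show False using T1[OF tr eE _ _ uw sub] e by auto
  qed
  show "D1 \<inter> D2 = {}"
  proof (rule ccontr)
    assume "D1 \<inter> D2 \<noteq> {}"
    then obtain f where f: "f \<in> D1" "f \<in> D2" by auto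
    then obtain a b where "f = {a,b}" using tree_edge[OF tr] DE unfolding D1R by blast
    then have "a \<in> Rs" "a \<in> Rw" using f unfolding D1R D2R by auto
    then have "w \<in> Rs" unfolding Rs_def Rw_def by (metis mem_Collect_eq rt_sym rtranclp_trans)
    then show False using wRs by simp
  qed
  have cov: "x \<in> Rs \<or> x \<in> Rw" if "(adj D)\<^sup>*\<^sup>* s x" for x
    using that
  proof (induction rule: rtranclp_induct)
    case base then show ?case unfolding Rs_def by simp
  next
    case (step y z)
    show ?case
    proof (cases "{y,z} = e")
      case True
      then have "z = u \<or> z = w" using e by (auto simp: doubleton_eq_iff)
      then show ?thesis using us unfolding Rs_def Rw_def by auto
    next
      case False
      then have "adj (D-{e}) y z" using step(2) unfolding adj_def by auto
      have "(adj (D-{e}))\<^sup>*\<^sup>* s y \<or> (adj (D-{e}))\<^sup>*\<^sup>* w y" using step.IH unfolding Rs_def Rw_def by simp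
      then have "(adj (D-{e}))\<^sup>*\<^sup>* s z \<or> (adj (D-{e}))\<^sup>*\<^sup>* w z"
        using rtranclp.rtrancl_into_rtrancl[of "adj (D-{e})" s y z] rtranclp.rtrancl_into_rtrancl[of "adj (D-{e})" w y z] \<open>adj (D-{e}) y z\<close> by blast
      then show ?thesis unfolding Rs_def Rw_def by simp
    qed
  qed
  show U: "D1 \<union> D2 = D - {e}"
  proof
    show "D1 \<union> D2 \<subseteq> D - {e}" unfolding D1R D2R by auto
    show "D - {e} \<subseteq> D1 \<union> D2"
    proof
      fix f assume f: "f \<in> D - {e}"
      then obtain a b where ab: "a \<noteq> b" "f = {a,b}" using tree_edge[OF tr] DE by blast
      then have adjab: "adj (D-{e}) a b" "adj (D-{e}) b a" using f unfolding adj_def by (auto simp: insert_commute)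
      have "a \<in> \<Union>D" using f ab by auto
      have "a \<in> Rs \<or> a \<in> Rw" by (rule cov[OF conn[rule_format, OF \<open>a \<in> \<Union>D\<close>]])
      then show "f \<in> D1 \<union> D2"
      proof
        assume "a \<in> Rs"
        then have "b \<in> Rs" using rtranclp.rtrancl_into_rtrancl[of "adj (D-{e})" s a b] adjab(1) unfolding Rs_def by simp
        then show ?thesis using \<open>a \<in> Rs\<close> f ab unfolding D1R by auto
      next
        assume "a \<in> Rw"
        then have "b \<in> Rw" using rtranclp.rtrancl_into_rtrancl[of "adj (D-{e})" w a b] adjab(1) unfolding Rw_def by simp
        then show ?thesis using \<open>a \<in> Rw\<close> f ab unfolding D2R by auto
      qed
    qed
  qed
  show f1: "finite D1" "finite D2" using fin unfolding D1R D2R by auto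
  show "card D1 + card D2 + 1 = card D"
  proof -
    have "card (D1 \<union> D2) = card D1 + card D2" using f1 \<open>D1 \<inter> D2 = {}\<close> by (simp add: card_Un_disjoint)
    moreover have "card (D - {e}) + 1 = card D" using fin eD
      by (metis card_Diff1_less card_Diff_singleton Suc_diff_1 Suc_eq_plus1 gr_implies_not0 not_gr0)
    ultimately show ?thesis using U by simp
  qed
  show r1: "\<forall>x\<in>Rs. (adj D1)\<^sup>*\<^sup>* s x" unfolding D1_def Rs_def using rt_sub by fastforce
  show r2: "\<forall>x\<in>Rw. (adj D2)\<^sup>*\<^sup>* w x" unfolding D2_def Rw_def using rt_sub by fastforce
  show v1: "Rs \<subseteq> {s} \<union> \<Union>D1" using r1 rt_verts by fastforce
  show v2: "Rw \<subseteq> {w} \<union> \<Union>D2" using r2 rt_verts by fastforce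
  show "\<Union>D \<subseteq> {s} \<union> \<Union>D1 \<union> {w} \<union> \<Union>D2"
  proof
    fix x assume "x \<in> \<Union>D"
    then obtain f where f: "f \<in> D" "x \<in> f" by auto
    show "x \<in> {s} \<union> \<Union>D1 \<union> {w} \<union> \<Union>D2"
    proof (cases "f = e")
      case True
      then have "x = u \<or> x = w" using f e by auto
      moreover have "u \<in> Rs" using us unfolding Rs_def by simp
      ultimately show ?thesis using v1 by auto
    next
      case False
      then have "f \<in> D1 \<union> D2" using U f by auto
      then show ?thesis using f by auto
    qed
  qed
  show "\<forall>x\<in>\<Union>D1. (adj D1)\<^sup>*\<^sup>* s x" using r1 unfolding D1R by auto
  show "\<forall>x\<in>\<Union>D2. (adj D2)\<^sup>*\<^sup>* w x" using r2 unfolding D2R by auto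
  show "D1 \<subseteq> E" "D2 \<subseteq> E" using DE unfolding D1R D2R by auto
qed

lemma path_restrict:
  assumes "is_path A P" "hd P = s"
  shows "is_path {f \<in> A. f \<subseteq> {y. (adj A)\<^sup>*\<^sup>* s y}} P"
proof -
  have R: "(adj A)\<^sup>*\<^sup>* s (P!i)" if "i < length P" for i
    using rt_mono[OF path_reach[OF assms(1) that] path_edges_sub[OF assms(1)]] assms(2) by simp
  show ?thesis unfolding is_path_def
  proof (intro conjI allI impI)
    show "P \<noteq> []" "distinct P" using assms(1) unfolding is_path_def by auto
    fix i assume i: "i + 1 < length P"
    then have "adj A (P!i) (P!(i+1))" using assms(1) unfolding is_path_def by auto
    then show "adj {f \<in> A. f \<subseteq> {y. (adj A)\<^sup>*\<^sup>* s y}} (P ! i) (P ! (i + 1))"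
      using R[of i] R[of "i+1"] i unfolding adj_def by auto
  qed
qed

lemma path_avoid:
  assumes "is_path A P" "e \<notin> path_edges P"
  shows "is_path (A - {e}) P"
  using assms unfolding is_path_def path_edges_def adj_def by fastforce


lemma TOUR:
  assumes tr: "tree V E"
  shows "D \<subseteq> E \<Longrightarrow> finite D \<Longrightarrow> s \<in> V \<Longrightarrow> (\<forall>x\<in>\<Union>D. (adj D)\<^sup>*\<^sup>* s x) \<Longrightarrow> is_path D P \<Longrightarrow> hd P = s \<Longrightarrow>
   \<exists>W. is_walk V E W \<and> hd W = s \<and> last W = last P \<and> {s} \<union> \<Union>D \<subseteq> set W
      \<and> walk_length W + card (path_edges P) \<le> 2 * card D"
proof (induction "card D" arbitrary: D s P rule: less_induct)
  case less
  have Pne: "P \<noteq> []" using less.prems(5) unfolding is_path_def by auto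
  have PE: "is_path E P" using is_path_mono[OF less.prems(5,1)] .
  show ?case
  proof (cases "D \<subseteq> path_edges P")
    case True
    then have DP: "D = path_edges P" using path_edges_sub[OF less.prems(5)] by auto
    have "set P \<subseteq> {s} \<union> \<Union>(path_edges P)" using path_verts[OF Pne] less.prems(6) by simp
    also have "\<dots> \<subseteq> V" using tree_edges_V[OF tr] path_edges_sub[OF PE] less.prems(3) by auto
    finally have PV: "set P \<subseteq> V" .
    have w: "is_walk V E P" "walk_length P = length P - 1" using path_walk[OF PE PV] by auto
    have c: "card (path_edges P) = length P - 1" using PE unfolding is_path_def by (simp add: path_edges_card)
    have "{s} \<union> \<Union>D \<subseteq> set P" using DP path_edges_verts[of P] Pne less.prems(6) by auto
    then show ?thesis using w c DP less.prems(6) by (intro exI[of _ P]) auto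
  next
    case False
    then obtain e where eD: "e \<in> D" and eP: "e \<notin> path_edges P" by auto
    obtain a b where ab: "a \<noteq> b" "a \<in> V" "b \<in> V" "e = {a,b}" using tree_edge[OF tr] eD less.prems(1) by blast
    obtain u w where uw: "e = {u,w}" "u \<noteq> w" "u \<in> V" "w \<in> V" "(adj (D-{e}))\<^sup>*\<^sup>* s u"
      using ORI[OF less.prems(1) less.prems(4) eD ab(4)] ab by (metis insert_commute)
    define D1 where "D1 = {f \<in> D - {e}. f \<subseteq> {x. (adj (D-{e}))\<^sup>*\<^sup>* s x}}"
    define D2 where "D2 = {f \<in> D - {e}. f \<subseteq> {x. (adj (D-{e}))\<^sup>*\<^sup>* w x}}"
    note S = SPLIT[OF tr less.prems(1,2,4) eD uw(1,2,5), folded D1_def D2_def]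
    have c1: "card D1 < card D" "card D2 < card D" using S(4) by auto
    have P1: "is_path D1 P" unfolding D1_def using path_restrict[OF path_avoid[OF less.prems(5) eP] less.prems(6)] .
    obtain W1 where W1: "is_walk V E W1" "hd W1 = s" "last W1 = last P" "{s} \<union> \<Union>D1 \<subseteq> set W1"
        "walk_length W1 + card (path_edges P) \<le> 2 * card D1"
      using less.hyps[OF c1(1) S(14) S(12) less.prems(3) S(10) P1 less.prems(6)] by blast
    have P2: "is_path D2 [w]" by (rule is_path_single)
    have pe2: "path_edges [w] = {}" unfolding path_edges_def by auto
    obtain W2 where W2: "is_walk V E W2" "hd W2 = w" "last W2 = w" "{w} \<union> \<Union>D2 \<subseteq> set W2"
        "walk_length W2 \<le> 2 * card D2"
      using less.hyps[OF c1(2) S(15) S(13) uw(4) S(11) P2] pe2 by fastforce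
    have "u \<in> set W1" using S(7) uw(5) W1(4) by auto
    then obtain A B where AB: "W1 = A @ u # B" by (meson split_list)
    have W2ne: "W2 \<noteq> []" using walk_ne[OF W2(1)] .
    have adjuw: "adj E u w" "adj E w u" using uw eD less.prems(1) unfolding adj_def by (auto simp: insert_commute)
    define W where "W = A @ u # (W2 @ u # B)"
    have wA: "is_walk V E (A @ [u])" "is_walk V E (u # B)" using W1(1) AB is_walk_app[of V E A u B] by auto
    have "is_walk V E (W2 @ [u])" using is_walk_snoc[OF W2(1) uw(3)] W2(3) adjuw by auto
    then have "is_walk V E (W2 @ u # B)" using wA is_walk_app[of V E W2 u B] by auto
    moreover have "hd (W2 @ u # B) = w" using W2ne W2(2) by simp
    ultimately have "is_walk V E (u # (W2 @ u # B))" using is_walk_cons[of "W2 @ u # B"] uw(3) adjuw by auto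
    then have Ww: "is_walk V E W" unfolding W_def using wA is_walk_app[of V E A u "W2 @ u # B"] by auto
    have hW: "hd W = s" unfolding W_def using W1(2) AB by (cases A) auto
    have lW: "last W = last P" unfolding W_def using W1(3) AB by simp
    have l1: "walk_length W1 = walk_length (A @ [u]) + walk_length (u # B)" using AB walk_length_app by simp
    have "walk_length (W2 @ u # B) = walk_length W2 + 1 + walk_length (u # B)"
      using walk_length_app[of W2 u B] walk_length_snoc[OF W2ne, of u] W2(3) uw(2) by simp
    moreover have "walk_length (u # (W2 @ u # B)) = 1 + walk_length (W2 @ u # B)"
      using walk_length_cons[of "W2 @ u # B" u] W2ne W2(2) uw(2) by simp
    ultimately have "walk_length W = walk_length W1 + walk_length W2 + 2"
      unfolding W_def using walk_length_app[of A u "W2 @ u # B"] l1 by simp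
    then have len: "walk_length W + card (path_edges P) \<le> 2 * card D"
      using W1(5) W2(5) S(4) by simp
    have s12: "set W1 \<subseteq> set W" "set W2 \<subseteq> set W" unfolding W_def using AB by auto
    have x1: "{s} \<union> \<Union>D1 \<subseteq> set W" using W1(4) s12(1) by (rule subset_trans)
    have x2: "{w} \<union> \<Union>D2 \<subseteq> set W" using W2(4) s12(2) by (rule subset_trans)
    have x3: "{s} \<union> \<Union>D1 \<union> {w} \<union> \<Union>D2 \<subseteq> set W" using x1 x2 by (simp only: Un_subset_iff)
    have x4: "{s} \<union> \<Union>D \<subseteq> {s} \<union> \<Union>D1 \<union> {w} \<union> \<Union>D2"
      using Un_least[OF _ S(9), of "{s}"] by simp
    have "{s} \<union> \<Union>D \<subseteq> set W" using x4 x3 by (rule subset_trans)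
    then show ?thesis using Ww hW lW len by blast
  qed
qed


locale opt =
  fixes V :: "'a set" and E :: "'a set set" and s :: "nat \<Rightarrow> 'a" and k :: nat
    and W :: "nat \<Rightarrow> 'a list" and P :: "nat \<Rightarrow> 'a list"
  assumes tr: "tree V E"
    and sV: "\<forall>i<k. s i \<in> V"
    and st: "strategy V E s k W" and cov: "covering V k W"
    and opt: "\<forall>W'. strategy V E s k W' \<and> covering V k W' \<longrightarrow>
               strategy_length k W \<le> strategy_length k W'"
    and Pp: "\<forall>i<k. is_path (traversed (W i)) (P i) \<and> hd (P i) = hd (W i) \<and> last (P i) = last (W i)"
begin

abbreviation "DD i \<equiv> traversed (W i)"
abbreviation "PE i \<equiv> path_edges (P i)"

lemma Wi: "i < k \<Longrightarrow> is_walk V E (W i)" "i < k \<Longrightarrow> hd (W i) = s i"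
  using st unfolding strategy_def by auto

lemma Di: assumes "i < k"
  shows "DD i \<subseteq> E" "finite (DD i)" "\<forall>x\<in>\<Union>(DD i). (adj (DD i))\<^sup>*\<^sup>* (s i) x"
    "set (W i) \<subseteq> {s i} \<union> \<Union>(DD i)"
  using walk_trav_E[OF Wi(1)[OF assms]] finite_trav walk_conn[OF Wi(1)[OF assms]]
    walk_set[OF Wi(1)[OF assms]] Wi(2)[OF assms] by auto

lemma Pi: assumes "i < k"
  shows "is_path (DD i) (P i)" "hd (P i) = s i" "last (P i) = last (W i)" "PE i \<subseteq> DD i"
    "set (P i) \<subseteq> {s i} \<union> \<Union>(DD i)" "s i \<in> set (P i)"
proof -
  show 1: "is_path (DD i) (P i)" "hd (P i) = s i" "last (P i) = last (W i)"
    using Pp Wi(2)[OF assms] assms by auto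
  show 2: "PE i \<subseteq> DD i" using path_edges_sub[OF 1(1)] .
  have ne: "P i \<noteq> []" using 1(1) unfolding is_path_def by auto
  show "set (P i) \<subseteq> {s i} \<union> \<Union>(DD i)" using path_verts[OF ne] 1(2) 2 by auto
  show "s i \<in> set (P i)" using ne 1(2) by (metis list.set_sel(1))
qed

lemma LBi: "i < k \<Longrightarrow> 2 * card (DD i) \<le> walk_length (W i) + card (PE i)"
  using LB(3)[OF tr Wi(1) Pi(1)] Pi(2,3) Wi(2) by auto

lemma ptour:
  assumes "i < k"
  shows "\<exists>W'. is_walk V E W' \<and> hd W' = s i \<and> {s i} \<union> \<Union>(DD i) \<subseteq> set W'
      \<and> walk_length W' + card (PE i) \<le> 2 * card (DD i)"
  using TOUR[OF tr Di(1,2)[OF assms] _ Di(3)[OF assms] Pi(1,2)[OF assms]] sV assms by blast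

lemma sum_upd2:
  fixes f :: "nat \<Rightarrow> nat"
  assumes "i < k" "r < k" "i \<noteq> r"
  shows "(\<Sum>m<k. f m) = f i + f r + (\<Sum>m\<in>{..<k} - {i} - {r}. f m)"
proof -
  have "(\<Sum>m<k. f m) = f i + (\<Sum>m\<in>{..<k} - {i}. f m)" using assms by (simp add: sum.remove)
  also have "(\<Sum>m\<in>{..<k} - {i}. f m) = f r + (\<Sum>m\<in>{..<k} - {i} - {r}. f m)"
    using assms by (intro sum.remove) auto
  finally show ?thesis by simp
qed

lemma improve2:
  assumes "i < k" "r < k" "i \<noteq> r" "is_walk V E a" "hd a = s i" "is_walk V E b" "hd b = s r"
    "set (W i) \<union> set (W r) \<subseteq> set a \<union> set b"
  shows "walk_length (W i) + walk_length (W r) \<le> walk_length a + walk_length b"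
proof -
  define W' where "W' = W(i := a, r := b)"
  have "strategy V E s k W'"
    using st assms unfolding strategy_def W'_def by auto
  moreover have "covering V k W'"
    unfolding covering_def
  proof
    fix x assume "x \<in> V"
    then obtain m where m: "m < k" "x \<in> set (W m)" using cov unfolding covering_def by auto
    show "x \<in> (\<Union>m<k. set (W' m))"
    proof (cases "m = i \<or> m = r")
      case True
      then have "x \<in> set (W' i) \<union> set (W' r)" using m assms(3,8) unfolding W'_def by auto
      then show ?thesis using assms(1,2) by auto
    next
      case False
      then show ?thesis using m unfolding W'_def by auto
    qed
  qed
  ultimately have le: "strategy_length k W \<le> strategy_length k W'" using opt by blast
  have "strategy_length k W = walk_length (W i) + walk_length (W r) + (\<Sum>m\<in>{..<k} - {i} - {r}. walk_length (W m))"
    unfolding strategy_length_def by (rule sum_upd2[OF assms(1-3)])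
  moreover have "strategy_length k W' = walk_length a + walk_length b + (\<Sum>m\<in>{..<k} - {i} - {r}. walk_length (W m))"
  proof -
    have "strategy_length k W' = walk_length (W' i) + walk_length (W' r) + (\<Sum>m\<in>{..<k} - {i} - {r}. walk_length (W' m))"
      unfolding strategy_length_def by (rule sum_upd2[OF assms(1-3)])
    moreover have "(\<Sum>m\<in>{..<k} - {i} - {r}. walk_length (W' m)) = (\<Sum>m\<in>{..<k} - {i} - {r}. walk_length (W m))"
      unfolding W'_def by (intro sum.cong) auto
    ultimately show ?thesis unfolding W'_def using assms(3) by simp
  qed
  ultimately show ?thesis using le by simp
qed

lemma improve1:
  assumes "i < k" "is_walk V E a" "hd a = s i" "set (W i) \<subseteq> set a"
  shows "walk_length (W i) \<le> walk_length a"
proof -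
  define W' where "W' = W(i := a)"
  have "strategy V E s k W'"
    using st assms unfolding strategy_def W'_def by auto
  moreover have "covering V k W'"
    unfolding covering_def
  proof
    fix x assume "x \<in> V"
    then obtain m where m: "m < k" "x \<in> set (W m)" using cov unfolding covering_def by auto
    show "x \<in> (\<Union>m<k. set (W' m))"
    proof (cases "m = i")
      case True
      then have "x \<in> set (W' i)" using m assms unfolding W'_def by auto
      then show ?thesis using assms(1) by auto
    next
      case False
      then show ?thesis using m unfolding W'_def by auto
    qed
  qed
  ultimately have le: "strategy_length k W \<le> strategy_length k W'" using opt by blast
  have "strategy_length k W = walk_length (W i) + (\<Sum>m\<in>{..<k} - {i}. walk_length (W m))"
    unfolding strategy_length_def using assms(1) by (simp add: sum.remove)
  moreover have "strategy_length k W' = walk_length a + (\<Sum>m\<in>{..<k} - {i}. walk_length (W m))"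
  proof -
    have "strategy_length k W' = walk_length (W' i) + (\<Sum>m\<in>{..<k} - {i}. walk_length (W' m))"
      unfolding strategy_length_def using assms(1) by (simp add: sum.remove)
    moreover have "(\<Sum>m\<in>{..<k} - {i}. walk_length (W' m)) = (\<Sum>m\<in>{..<k} - {i}. walk_length (W m))"
      unfolding W'_def by (intro sum.cong) auto
    ultimately show ?thesis unfolding W'_def by simp
  qed
  ultimately show ?thesis using le by simp
qed

lemma counts:
  assumes "i < k" "e \<in> DD i"
  shows "trav_count (W i) e = (if e \<in> PE i then 1 else 2)"
proof -
  obtain a where a: "is_walk V E a" "hd a = s i" "{s i} \<union> \<Union>(DD i) \<subseteq> set a"
      "walk_length a + card (PE i) \<le> 2 * card (DD i)"
    using ptour[OF assms(1)] by blast
  have "walk_length (W i) \<le> walk_length a" using improve1[OF assms(1) a(1,2)] a(3) Di(4)[OF assms(1)] by auto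
  have hP: "hd (P i) = hd (W i)" using Pi(2)[OF assms(1)] Wi(2)[OF assms(1)] by simp
  note L = LB[OF tr Wi(1)[OF assms(1)] Pi(1)[OF assms(1)] hP Pi(3)[OF assms(1)]]
  have "(\<Sum>e\<in>DD i. trav_count (W i) e) \<le> (\<Sum>e\<in>DD i. (if e \<in> PE i then 1 else 2::nat))"
    using L(2) a(4) \<open>walk_length (W i) \<le> walk_length a\<close> wl_sum[of "W i"] Wi(2)[OF assms(1)] by simp
  moreover have "(\<Sum>e\<in>DD i. (if e \<in> PE i then 1 else 2::nat)) \<le> (\<Sum>e\<in>DD i. trav_count (W i) e)"
    using L(1) Wi(2)[OF assms(1)] by (simp add: sum_mono)
  ultimately have eq: "(\<Sum>e\<in>DD i. (if e \<in> PE i then 1 else 2::nat)) = (\<Sum>e\<in>DD i. trav_count (W i) e)" by simp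
  show ?thesis using sum_mono_inv[OF eq _ assms(2) finite_trav] L(1) Wi(2)[OF assms(1)] by auto
qed

end

context opt begin

lemma EXCH:
  assumes i: "i < k" "r < k" "i \<noteq> r" and eD: "e \<in> DD i" "e \<notin> PE i" and we: "w \<in> e"
    and wn: "\<not> (adj (DD i - {e}))\<^sup>*\<^sup>* (s i) w" and yw: "(adj (DD i - {e}))\<^sup>*\<^sup>* w y"
    and yr: "y \<in> {s r} \<union> \<Union>(DD r)"
  shows False
proof -
  have eE: "e \<in> E" using Di(1)[OF i(1)] eD by auto
  obtain a b where ab: "a \<noteq> b" "a \<in> V" "b \<in> V" "e = {a,b}" using tree_edge[OF tr eE] by blast
  have ori: "(adj (DD i - {e}))\<^sup>*\<^sup>* (s i) a \<or> (adj (DD i - {e}))\<^sup>*\<^sup>* (s i) b"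
    using ORI[OF Di(1)[OF i(1)] Di(3)[OF i(1)] eD(1) ab(4)] .
  obtain u where uw: "e = {u,w}" "u \<noteq> w" "(adj (DD i - {e}))\<^sup>*\<^sup>* (s i) u" "w \<in> V"
  proof (cases "w = a")
    case True
    then show ?thesis using that[of b] ori wn ab by (auto simp: insert_commute)
  next
    case False
    then have "w = b" using we ab by auto
    then show ?thesis using that[of a] ori wn ab by auto
  qed
  define D1 where "D1 = {f \<in> DD i - {e}. f \<subseteq> {x. (adj (DD i - {e}))\<^sup>*\<^sup>* (s i) x}}"
  define D2 where "D2 = {f \<in> DD i - {e}. f \<subseteq> {x. (adj (DD i - {e}))\<^sup>*\<^sup>* w x}}"
  note S = SPLIT[OF tr Di(1)[OF i(1)] Di(2)[OF i(1)] Di(3)[OF i(1)] eD(1) uw(1,2,3), folded D1_def D2_def]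
  have P1: "is_path D1 (P i)" unfolding D1_def
    using path_restrict[OF path_avoid[OF Pi(1)[OF i(1)] eD(2)] Pi(2)[OF i(1)]] .
  obtain Wa where Wa: "is_walk V E Wa" "hd Wa = s i" "{s i} \<union> \<Union>D1 \<subseteq> set Wa"
      "walk_length Wa + card (PE i) \<le> 2 * card D1"
    using TOUR[OF tr S(14) S(12) _ S(10) P1 Pi(2)[OF i(1)]] sV i(1) by blast
  define Db where "Db = DD r \<union> D2"
  have DbE: "Db \<subseteq> E" "finite Db" unfolding Db_def using Di(1,2)[OF i(2)] S(13,15) by auto
  have sr_y: "(adj (DD r))\<^sup>*\<^sup>* (s r) y"
  proof (cases "y = s r")
    case True then show ?thesis by simp
  next
    case False then show ?thesis using yr Di(3)[OF i(2)] by blast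
  qed
  have w_y: "(adj D2)\<^sup>*\<^sup>* w y" using S(6) yw by blast
  have sub1: "DD r \<subseteq> Db" "D2 \<subseteq> Db" unfolding Db_def by auto
  have sr_w: "(adj Db)\<^sup>*\<^sup>* (s r) w"
    using rt_mono[OF sr_y sub1(1)] rt_sym[OF rt_mono[OF w_y sub1(2)]] by (rule rtranclp_trans)
  have connb: "\<forall>x\<in>\<Union>Db. (adj Db)\<^sup>*\<^sup>* (s r) x"
  proof
    fix x assume "x \<in> \<Union>Db"
    then have "x \<in> \<Union>(DD r) \<or> x \<in> \<Union>D2" unfolding Db_def by auto
    then show "(adj Db)\<^sup>*\<^sup>* (s r) x"
    proof
      assume "x \<in> \<Union>(DD r)"
      then show ?thesis using rt_mono[OF _ sub1(1)] Di(3)[OF i(2)] by blast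
    next
      assume "x \<in> \<Union>D2"
      then have "(adj D2)\<^sup>*\<^sup>* w x" using S(11) by blast
      then show ?thesis using sr_w rt_mono[OF _ sub1(2)] by (meson rtranclp_trans)
    qed
  qed
  have Pb: "is_path Db (P r)" using is_path_mono[OF Pi(1)[OF i(2)] sub1(1)] .
  obtain Wb where Wb: "is_walk V E Wb" "hd Wb = s r" "{s r} \<union> \<Union>Db \<subseteq> set Wb"
      "walk_length Wb + card (PE r) \<le> 2 * card Db"
    using TOUR[OF tr DbE(1,2) _ connb Pb Pi(2)[OF i(2)]] sV i(2) by blast
  have cDb: "card Db \<le> card (DD r) + card D2" unfolding Db_def by (rule card_Un_le)
  have wWb: "w \<in> set Wb"
  proof (cases "w = y")
    case True then show ?thesis using yr Wb(3) unfolding Db_def by auto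
  next
    case False
    then have "w \<in> \<Union>D2" using rt_verts2[OF w_y] by blast
    then show ?thesis using Wb(3) unfolding Db_def by auto
  qed
  have c1: "set (W i) \<subseteq> set Wa \<union> set Wb"
  proof
    fix x assume "x \<in> set (W i)"
    then have "x \<in> {s i} \<union> \<Union>(DD i)" using Di(4)[OF i(1)] by blast
    then have "x \<in> {s i} \<union> \<Union>D1 \<or> x = w \<or> x \<in> \<Union>D2" using S(9) by blast
    moreover have "\<Union>D2 \<subseteq> set Wb" using Wb(3) unfolding Db_def by auto
    ultimately show "x \<in> set Wa \<union> set Wb" using Wa(3) wWb by blast
  qed
  have c2: "set (W r) \<subseteq> set Wb"
  proof -
    have "{s r} \<union> \<Union>(DD r) \<subseteq> set Wb" using Wb(3) unfolding Db_def by auto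
    then show ?thesis using Di(4)[OF i(2)] by (rule subset_trans[rotated])
  qed
  have "walk_length (W i) + walk_length (W r) \<le> walk_length Wa + walk_length Wb"
    using improve2[OF i Wa(1,2) Wb(1,2)] c1 c2 by blast
  moreover have "2 * card (DD i) \<le> walk_length (W i) + card (PE i)" using LBi[OF i(1)] .
  moreover have "2 * card (DD r) \<le> walk_length (W r) + card (PE r)" using LBi[OF i(2)] .
  ultimately show False using Wa(4) Wb(4) cDb S(4) by linarith
qed

lemma LAST:
  assumes i: "i < k" and x: "x \<in> \<Union>(DD i)" "x \<notin> set (P i)"
  shows "\<exists>h. h \<in> DD i \<and> h \<notin> PE i \<and> x \<in> h \<and> \<not> (adj (DD i - {h}))\<^sup>*\<^sup>* (s i) x"
proof -
  obtain Q where Q: "is_path (DD i) Q" "hd Q = s i" "last Q = x"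
    using rt_path[OF Di(3)[OF i, rule_format, OF x(1)]] by blast
  have xs: "x \<noteq> s i" using x(2) Pi(6)[OF i] by auto
  have Qne: "Q \<noteq> []" using Q unfolding is_path_def by auto
  define n where "n = length Q"
  have n2: "n \<ge> 2"
  proof (rule ccontr)
    assume "\<not> n \<ge> 2"
    moreover have "n > 0" using Qne unfolding n_def by simp
    ultimately have "n = 1" by linarith
    then have "hd Q = last Q" using Qne unfolding n_def by (simp add: hd_conv_nth last_conv_nth)
    then show False using Q xs by simp
  qed
  define q where "q = Q!(n-2)"
  have xQ: "x = Q!(n-1)" using Q(3) Qne unfolding n_def by (simp add: last_conv_nth)
  have "adj (DD i) (Q!(n-2)) (Q!(n-2+1))" using Q(1) n2 unfolding is_path_def n_def by auto
  moreover have "n - 2 + 1 = n - 1" using n2 by simp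
  ultimately have aqx: "adj (DD i) q x" unfolding q_def using xQ by simp
  define h where "h = {q, x}"
  have hD: "h \<in> DD i" unfolding h_def using adj_edge[OF aqx] .
  have qx: "q \<noteq> x" using aqx unfolding adj_def by auto
  have hE: "h \<in> E" using hD Di(1)[OF i] by auto
  have hP: "h \<notin> PE i"
  proof
    assume "h \<in> PE i"
    then have "x \<in> \<Union>(PE i)" unfolding h_def by auto
    then show False using path_edges_verts[of "P i"] x(2) by auto
  qed
  have "\<not> (adj (DD i - {h}))\<^sup>*\<^sup>* (s i) x"
  proof
    assume sx: "(adj (DD i - {h}))\<^sup>*\<^sup>* (s i) x"
    have "(adj (DD i - {h}))\<^sup>*\<^sup>* (Q!0) (Q!(n-2))"
    proof (rule list_reach)
      fix m assume m: "0 \<le> m" "m < n - 2"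
      then have "adj (DD i) (Q!m) (Q!(m+1))" using Q(1) unfolding is_path_def n_def by auto
      moreover have "Q!m \<noteq> x" "Q!(Suc m) \<noteq> x"
        using Q(1) m xQ unfolding is_path_def n_def by (auto simp: nth_eq_iff_index_eq)
      moreover have "{Q!m, Q!(Suc m)} \<noteq> {q, x}" using \<open>Q!m \<noteq> x\<close> \<open>Q!(Suc m) \<noteq> x\<close> by (auto simp: doubleton_eq_iff)
      ultimately show "Q!m = Q!(Suc m) \<or> adj (DD i - {h}) (Q!m) (Q!(Suc m))"
        unfolding adj_def h_def by auto
    qed simp
    moreover have "Q!0 = s i" using Q(2) Qne by (simp add: hd_conv_nth)
    ultimately have "(adj (DD i - {h}))\<^sup>*\<^sup>* q (s i)" unfolding q_def using rt_sym by metis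
    then have "(adj (DD i - {h}))\<^sup>*\<^sup>* q x" using sx by (rule rtranclp_trans)
    then show False using T1[OF tr hE, of q x "DD i - {h}"] qx Di(1)[OF i] unfolding h_def by auto
  qed
  then show ?thesis using hD hP unfolding h_def by auto
qed

lemma others:
  assumes i: "i < k" "j < k" "j \<noteq> i" and e: "e \<in> DD i" "e \<notin> PE i"
  shows "trav_count (W j) e = 0"
proof (rule ccontr)
  assume "trav_count (W j) e \<noteq> 0"
  then have "{ii. ii + 1 < length (W j) \<and> W j ! ii \<noteq> W j ! (ii + 1) \<and> {W j ! ii, W j ! (ii + 1)} = e} \<noteq> {}"
    unfolding trav_count_def by (metis card.empty)
  then have eDj: "e \<in> DD j" unfolding traversed_def by blast
  have eE: "e \<in> E" using Di(1)[OF i(1)] e by auto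
  obtain a b where ab: "a \<noteq> b" "e = {a,b}" using tree_edge[OF tr eE] by blast
  have "\<not> ((adj (DD i - {e}))\<^sup>*\<^sup>* (s i) a \<and> (adj (DD i - {e}))\<^sup>*\<^sup>* (s i) b)"
  proof
    assume "(adj (DD i - {e}))\<^sup>*\<^sup>* (s i) a \<and> (adj (DD i - {e}))\<^sup>*\<^sup>* (s i) b"
    then have "(adj (DD i - {e}))\<^sup>*\<^sup>* a b" by (meson rt_sym rtranclp_trans)
    then show False using T1[OF tr eE, of a b "DD i - {e}"] ab Di(1)[OF i(1)] by auto
  qed
  then obtain w where w: "w \<in> e" "\<not> (adj (DD i - {e}))\<^sup>*\<^sup>* (s i) w" using ab by auto
  have "w \<in> {s j} \<union> \<Union>(DD j)" using eDj w(1) by auto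
  then show False using EXCH[OF i(1,2) i(3)[symmetric] e w(1,2) rtranclp.rtrancl_refl] by blast
qed

lemma comp_exists:
  assumes i: "i < k" and r: "(adj (DD i))\<^sup>*\<^sup>* (s i) x"
  shows "\<exists>p\<in>set (P i). (adj (DD i - PE i))\<^sup>*\<^sup>* x p"
  using r
proof (induction rule: rtranclp_induct)
  case base then show ?case using Pi(6)[OF i] by blast
next
  case (step y z)
  show ?case
  proof (cases "{y,z} \<in> PE i")
    case True
    then have "z \<in> set (P i)" using path_edges_verts[of "P i"] by auto
    then show ?thesis by blast
  next
    case False
    then have "adj (DD i - PE i) z y" using step(2) adj_sym unfolding adj_def by (auto simp: insert_commute)
    then show ?thesis using step(3) by (meson converse_rtranclp_into_rtranclp)
  qed
qed

lemma comp_notP: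
  assumes i: "i < k" "r < k" and v: "v \<in> \<Union>(DD i - PE i)" and vz: "(adj (DD i - PE i))\<^sup>*\<^sup>* v z"
    and z: "z \<in> set (P r)"
  shows "z \<in> set (P i)"
proof (rule ccontr)
  assume zn: "z \<notin> set (P i)"
  then have ir: "i \<noteq> r" using z by auto
  have "z = v \<or> z \<in> \<Union>(DD i - PE i)" using rt_verts[OF vz] by blast
  then have zD: "z \<in> \<Union>(DD i)" using v by blast
  obtain h where h: "h \<in> DD i" "h \<notin> PE i" "z \<in> h" "\<not> (adj (DD i - {h}))\<^sup>*\<^sup>* (s i) z"
    using LAST[OF i(1) zD zn] by blast
  have "z \<in> {s r} \<union> \<Union>(DD r)" using Pi(5)[OF i(2)] z by blast
  then show False using EXCH[OF i ir h rtranclp.rtrancl_refl] by blast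
qed

lemma comp_P:
  assumes i: "i < k" and ab: "a < b" "b < length (P i)"
    and r: "(adj (DD i - PE i))\<^sup>*\<^sup>* (P i ! a) (P i ! b)"
  shows False
proof -
  define Q where "Q = P i"
  have dQ: "distinct Q" using Pi(1)[OF i] unfolding is_path_def Q_def by auto
  define h where "h = {Q!(b-1), Q!b}"
  have hP: "h \<in> PE i" unfolding h_def path_edges_def Q_def using ab
    by (intro CollectI exI[of _ "b-1"]) auto
  have hE: "h \<in> E" using hP Pi(4)[OF i] Di(1)[OF i] by auto
  have ne: "Q!(b-1) \<noteq> Q!b" using dQ ab unfolding Q_def by (auto simp: nth_eq_iff_index_eq)
  have r1: "(adj (PE i - {h}))\<^sup>*\<^sup>* (Q!a) (Q!(b-1))"
  proof (rule list_reach)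
    fix m assume m: "a \<le> m" "m < b - 1"
    have "Q!m \<noteq> Q!(Suc m)" "Q!m \<noteq> Q!b" "Q!(Suc m) \<noteq> Q!b"
      using dQ m ab unfolding Q_def by (auto simp: nth_eq_iff_index_eq)
    moreover have "{Q!m, Q!(m+1)} \<in> PE i" unfolding path_edges_def Q_def using m ab by auto
    moreover have "{Q!m, Q!(Suc m)} \<noteq> {Q!(b-1), Q!b}" using \<open>Q!m \<noteq> Q!b\<close> \<open>Q!(Suc m) \<noteq> Q!b\<close>
      by (auto simp: doubleton_eq_iff)
    ultimately show "Q!m = Q!(Suc m) \<or> adj (PE i - {h}) (Q!m) (Q!(Suc m))"
      unfolding adj_def h_def by auto
  qed (use ab in auto)
  define A where "A = (PE i - {h}) \<union> (DD i - PE i)"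
  have AE: "A \<subseteq> E - {h}" unfolding A_def using hP Pi(4)[OF i] Di(1)[OF i] by auto
  have "(adj A)\<^sup>*\<^sup>* (Q!(b-1)) (Q!a)" using rt_sym[OF rt_mono[OF r1]] unfolding A_def by auto
  moreover have "(adj A)\<^sup>*\<^sup>* (Q!a) (Q!b)" using rt_mono[OF r] unfolding A_def Q_def by auto
  ultimately have "(adj A)\<^sup>*\<^sup>* (Q!(b-1)) (Q!b)" by (rule rtranclp_trans)
  then show False using T1[OF tr hE _ _ ne AE] unfolding h_def by auto
qed

lemma comp_card:
  assumes i: "i < k" and v: "v \<in> \<Union>(DD i - PE i)"
  shows "card (component (DD i - PE i) v \<inter> (\<Union>r<k. set (P r))) = 1"
proof -
  have "v \<in> \<Union>(DD i)" using v by auto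
  then obtain p where p: "p \<in> set (P i)" "(adj (DD i - PE i))\<^sup>*\<^sup>* v p"
    using comp_exists[OF i] Di(3)[OF i] by blast
  have "component (DD i - PE i) v \<inter> (\<Union>r<k. set (P r)) = {p}"
  proof
    show "{p} \<subseteq> component (DD i - PE i) v \<inter> (\<Union>r<k. set (P r))"
      using p i unfolding component_def by auto
    show "component (DD i - PE i) v \<inter> (\<Union>r<k. set (P r)) \<subseteq> {p}"
    proof
      fix z assume "z \<in> component (DD i - PE i) v \<inter> (\<Union>r<k. set (P r))"
      then obtain r where z: "(adj (DD i - PE i))\<^sup>*\<^sup>* v z" "r < k" "z \<in> set (P r)"
        unfolding component_def by auto
      have zP: "z \<in> set (P i)" using comp_notP[OF i z(2) v z(1,3)] .
      have zp: "(adj (DD i - PE i))\<^sup>*\<^sup>* z p" using rt_sym[OF z(1)] p(2) by (rule rtranclp_trans)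
      obtain a where a: "a < length (P i)" "P i ! a = z" using zP by (meson in_set_conv_nth)
      obtain b where b: "b < length (P i)" "P i ! b = p" using p(1) by (meson in_set_conv_nth)
      have "a = b"
      proof (rule ccontr)
        assume "a \<noteq> b"
        then have "a < b \<or> b < a" by auto
        then show False
        proof
          assume "a < b" then show False using comp_P[OF i _ b(1)] zp a b by blast
        next
          assume "b < a" then show False using comp_P[OF i _ a(1)] rt_sym[OF zp] a b by blast
        qed
      qed
      then show "z \<in> {p}" using a b by simp
    qed
  qed
  then show ?thesis by simp
qed

lemma disj:
  assumes "j < k" "l < k" "j \<noteq> l" "x \<in> \<Union>(DD j - PE j)" "x \<in> \<Union>(DD l - PE l)"
  shows "x \<in> (\<Union>r<k. set (P r))"
proof (rule ccontr)
  assume "x \<notin> (\<Union>r<k. set (P r))"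
  then have xn: "x \<notin> set (P j)" using assms(1) by auto
  have "x \<in> \<Union>(DD j)" using assms(4) by auto
  then obtain h where h: "h \<in> DD j" "h \<notin> PE j" "x \<in> h" "\<not> (adj (DD j - {h}))\<^sup>*\<^sup>* (s j) x"
    using LAST[OF assms(1) _ xn] by blast
  have "x \<in> {s l} \<union> \<Union>(DD l)" using assms(5) by auto
  then show False using EXCH[OF assms(1-3) h rtranclp.rtrancl_refl] by blast
qed

end


theorem lemma1:
  fixes V :: "'a set" and E :: "'a set set" and s :: "nat \<Rightarrow> 'a"
    and k :: nat and W :: "nat \<Rightarrow> 'a list"
  assumes "tree V E"
    and "k \<ge> 1"
    and "\<forall>i<k. s i \<in> V"
    and "strategy V E s k W" and "covering V k W"
    and "\<forall>W'. strategy V E s k W' \<and> covering V k W' \<longrightarrow>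
               strategy_length k W \<le> strategy_length k W'"
  shows "\<exists>P F. (\<forall>i<k. is_path E (P i) \<and> hd (P i) = hd (W i) \<and> last (P i) = last (W i)
                  \<and> F i \<subseteq> E
                  \<and> traversed (W i) = path_edges (P i) \<union> F i
                  \<and> path_edges (P i) \<inter> F i = {}
                  \<and> (\<forall>e\<in>path_edges (P i). trav_count (W i) e = 1)
                  \<and> (\<forall>e\<in>F i. trav_count (W i) e = 2 \<and>
                        (\<forall>j<k. j \<noteq> i \<longrightarrow> trav_count (W j) e = 0))
                  \<and> (\<forall>v\<in>edge_verts (F i).
                        card (component (F i) v \<inter> (\<Union>r<k. set (P r))) = 1))
             \<and> (\<forall>j<k. \<forall>l<k. j \<noteq> l \<longrightarrow>
                  edge_verts (F j) \<inter> edge_verts (F l) \<subseteq> (\<Union>r<k. set (P r)))"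
proof -
  have "\<forall>i\<in>{..<k}. \<exists>Q. is_path (traversed (W i)) Q \<and> hd Q = hd (W i) \<and> last Q = last (W i)"
  proof
    fix i assume "i \<in> {..<k}"
    then have "is_walk V E (W i)" using assms(4) unfolding strategy_def by auto
    then show "\<exists>Q. is_path (traversed (W i)) Q \<and> hd Q = hd (W i) \<and> last Q = last (W i)"
      using rt_path[OF walk_reach_last] by blast
  qed
  then have "\<exists>P. \<forall>i\<in>{..<k}. is_path (traversed (W i)) (P i) \<and> hd (P i) = hd (W i) \<and> last (P i) = last (W i)"
    by (rule bchoice)
  then obtain P where Pp: "\<forall>i<k. is_path (traversed (W i)) (P i) \<and> hd (P i) = hd (W i) \<and> last (P i) = last (W i)"
    by auto
  interpret opt V E s k W P
    using assms(1,3,4,5,6) Pp by unfold_locales auto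
  define F where "F = (\<lambda>i. traversed (W i) - path_edges (P i))"
  have part1: "is_path E (P i) \<and> hd (P i) = hd (W i) \<and> last (P i) = last (W i)
                  \<and> F i \<subseteq> E
                  \<and> traversed (W i) = path_edges (P i) \<union> F i
                  \<and> path_edges (P i) \<inter> F i = {}
                  \<and> (\<forall>e\<in>path_edges (P i). trav_count (W i) e = 1)
                  \<and> (\<forall>e\<in>F i. trav_count (W i) e = 2 \<and>
                        (\<forall>j<k. j \<noteq> i \<longrightarrow> trav_count (W j) e = 0))
                  \<and> (\<forall>v\<in>edge_verts (F i).
                        card (component (F i) v \<inter> (\<Union>r<k. set (P r))) = 1)" if i: "i < k" for i
  proof (intro conjI)
    show "is_path E (P i)" using is_path_mono[OF Pi(1)[OF i] Di(1)[OF i]] .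
    show "hd (P i) = hd (W i)" "last (P i) = last (W i)" using Pp i by auto
    show "F i \<subseteq> E" unfolding F_def using Di(1)[OF i] by auto
    show "traversed (W i) = path_edges (P i) \<union> F i" unfolding F_def using Pi(4)[OF i] by auto
    show "path_edges (P i) \<inter> F i = {}" unfolding F_def by auto
    show "\<forall>e\<in>path_edges (P i). trav_count (W i) e = 1" using counts[OF i] Pi(4)[OF i] by auto
    show "\<forall>e\<in>F i. trav_count (W i) e = 2 \<and> (\<forall>j<k. j \<noteq> i \<longrightarrow> trav_count (W j) e = 0)"
      unfolding F_def using counts[OF i] others[OF i] by auto
    show "\<forall>v\<in>edge_verts (F i). card (component (F i) v \<inter> (\<Union>r<k. set (P r))) = 1"
      unfolding F_def edge_verts_def using comp_card[OF i] by auto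
  qed
  have part2: "\<forall>j<k. \<forall>l<k. j \<noteq> l \<longrightarrow>
                  edge_verts (F j) \<inter> edge_verts (F l) \<subseteq> (\<Union>r<k. set (P r))"
    unfolding F_def edge_verts_def using disj by blast
  show ?thesis using part1 part2 by blast
qed


end
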